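(* Let $B_1,\dots,B_n$ be components with pairwise disjoint action sets and $\gamma$ a set of interactions over them. For each $i$ let $\mathit{CI}(B_i^h)$ be the component invariant of $B_i^h$, and let $\mathit{II}(\gamma)$ be the interaction invariant. Then $\Phi=\exists\mathcal{H}_A.\big(\bigwedge_i\mathit{CI}(B_i^h)\wedge\mathit{II}(\gamma)\wedge\mathcal{E}(\gamma)\big)$ is an invariant of $\|_\gamma B_i$, where $\mathcal{H}_A$ is the set of all history clocks $h_0$ and $h_a$, $a\in\bigcup_iA_i$.
   Context: Components and semantics: a component is a timed automaton $B=(L,A,\mathcal{X},T,\mathsf{tpc},s_0)$ with locations $L$, actions $A$, clocks $\mathcal{X}$, edges $(l,(a,g,r),l')\in T$ (action, clock-constraint guard, reset set), time progress conditions $\mathsf{tpc}(l)$ (conjunctions of $x\le ct$), initial configuration $s_0=(l_0,c_0)$. States $(l,\mathbf{v})$, $\mathbf{v}$ a valuation in $\mathbb{R}_{\ge0}$; time transitions $(l,\mathbf{v})\xrightarrow{\delta}(l,\mathbf{v}+\delta)$ if $\mathsf{tpc}(l)$ holds along $[0,\delta]$; discrete transitions $(l,\mathbf{v})\xrightarrow{a}(l',\mathbf{v}[r])$ if $(l,(a,g,r),l')\in T$, $\mathbf{v}\models g$, $\mathbf{v}[r]\models\mathsf{tpc}(l')$; initial states $(l_0,\mathbf{v}_0)$ with $\mathbf{v}_0\models c_0$. A state predicate (boolean combination of location predicates $\mathit{at}(l)$ and clock constraints) is an invariant if it holds in every reachable state. Systems: for components $B_i$ with pairwise disjoint action sets $A_i$,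 an interaction is a nonempty $\alpha\subseteq\bigcup_iA_i$ with at most one action per component; $\mathit{Act}(\gamma)=\bigcup_{\alpha\in\gamma}\alpha$. $\|_\gamma B_i$ has locations $\times_iL_i$, clocks $\bigcup_i\mathcal{X}_i$, conjunction of tpc's and of initial constraints, and for each $\alpha=\{a_i\}_{i\in I}\in\gamma$ and edges $(l_i,(a_i,g_i,r_i),l'_i)\in T_i$ ($i\in I$) a joint edge with guard $\bigwedge_{i\in I}g_i$, reset $\bigcup_{i\in I}r_i$, moving exactly the components in $I$. History clocks: $B^h$ adds fresh clocks $h_0$ and $h_a$ ($a\in A$), adds $h_a$ to the resets of each edge labelled $a$, and has initial constraint $c_0\wedge h_0=0\wedge\bigwedge_{a\in A}h_a>0$. In $\|_\gamma B_i^h$, $h_0$ (never reset nor tested) is shared by all components. $\exists S.\Phi$ quantifies existentially over nonnegative real values of clocks in $S$. Invariants used: $\mathit{CI}(B^h)$ is the disjunction of $\mathit{at}(l)\wedge\zeta$ over all symbolic states $(l,\zeta)$ reachable in the (normalised) zone graph of $B^h$ from its initial symbolic state; it is an invariant of $B^h$. $\mathit{II}(\gamma)$ is a predicate over locations only (a conjunction of disjunctions of location predicates, obtained from initially marked traps of an associated Petri net) which is an invariant of $\|_\gamma B_i$. Interaction inequalities: $\gamma\ominus\alpha=\{\beta\setminus\alpha\mid\beta\in\gamma,\beta\not\subseteq\alpha\}$; $\mathcal{E}(\emptyset)=\mathit{true}$ and for $\gamma\ne\emptyset$, $\mathcal{E}(\gamma)=\bigvee_{\alpha\in\gamma}\Big(\bigwedge_{a_i,a_j\in\alpha}h_{a_i}=h_{a_j}\wedge\bigwedge_{a_i\in\alpha,\,a_k\in\mathit{Act}(\gamma\ominus\alpha)}h_{a_i}\le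 h_{a_k}\wedge\mathcal{E}(\gamma\ominus\alpha)\Big)$. *)

theory Defs
  imports Complex_Main
begin

datatype rel = RLt | RLe | REq | RGe | RGt

fun cmp :: "rel \<Rightarrow> real \<Rightarrow> real \<Rightarrow> bool" where
  "cmp RLt a b = (a < b)"
| "cmp RLe a b = (a \<le> b)"
| "cmp REq a b = (a = b)"
| "cmp RGe a b = (a \<ge> b)"
| "cmp RGt a b = (a > b)"

datatype 'x atom = Atom 'x rel int | Diag 'x 'x rel int

type_synonym 'x cc = "'x atom set"
type_synonym 'x val = "'x \<Rightarrow> real"

fun sat_atom :: "'x val \<Rightarrow> 'x atom \<Rightarrow> bool" where
  "sat_atom v (Atom x r c) = cmp r (v x) (of_int c)"
| "sat_atom v (Diag x y r c) = cmp r (v x - v y) (of_int c)"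

definition sat :: "'x val \<Rightarrow> 'x cc \<Rightarrow> bool" where
  "sat v g \<longleftrightarrow> (\<forall>t\<in>g. sat_atom v t)"

fun atom_clks :: "'x atom \<Rightarrow> 'x set" where
  "atom_clks (Atom x r c) = {x}"
| "atom_clks (Diag x y r c) = {x, y}"

definition cc_clks :: "'x cc \<Rightarrow> 'x set" where
  "cc_clks g = (\<Union>t\<in>g. atom_clks t)"

definition delay :: "'x val \<Rightarrow> real \<Rightarrow> 'x val" where
  "delay v d = (\<lambda>x. v x + d)"

definition reset :: "'x set \<Rightarrow> 'x val \<Rightarrow> 'x val" where
  "reset r v = (\<lambda>x. if x \<in> r then 0 else v x)"

text \<open>tpc l is a set of pairs (x, ct) standing for the conjunction of x \<le> ct.\<close>
record ('l, 'a, 'x) ta =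
  locs :: "'l set"
  acts :: "'a set"
  clks :: "'x set"
  edges :: "('l \<times> 'a \<times> 'x cc \<times> 'x set \<times> 'l) set"
  tpc :: "'l \<Rightarrow> ('x \<times> int) set"
  init_loc :: 'l
  init_cc :: "'x cc"

definition src :: "('l \<times> 'a \<times> 'x cc \<times> 'x set \<times> 'l) \<Rightarrow> 'l" where "src e = fst e"
definition lab :: "('l \<times> 'a \<times> 'x cc \<times> 'x set \<times> 'l) \<Rightarrow> 'a" where "lab e = fst (snd e)"
definition grd :: "('l \<times> 'a \<times> 'x cc \<times> 'x set \<times> 'l) \<Rightarrow> 'x cc" where "grd e = fst (snd (snd e))"
definition rst :: "('l \<times> 'a \<times> 'x cc \<times> 'x set \<times> 'l) \<Rightarrow> 'x set" where "rst e = fst (snd (snd (snd e)))"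
definition tgt :: "('l \<times> 'a \<times> 'x cc \<times> 'x set \<times> 'l) \<Rightarrow> 'l" where "tgt e = snd (snd (snd (snd e)))"

definition wf_ta :: "('l, 'a, 'x) ta \<Rightarrow> bool" where
  "wf_ta B \<longleftrightarrow> finite (locs B) \<and> finite (acts B) \<and> finite (clks B) \<and> finite (edges B)
     \<and> init_loc B \<in> locs B \<and> finite (init_cc B) \<and> cc_clks (init_cc B) \<subseteq> clks B
     \<and> (\<forall>l. finite (tpc B l) \<and> fst ` tpc B l \<subseteq> clks B)
     \<and> (\<forall>e\<in>edges B. src e \<in> locs B \<and> lab e \<in> acts B \<and> finite (grd e) \<and> cc_clks (grd e) \<subseteq> clks B
                     \<and> rst e \<subseteq> clks B \<and> tgt e \<in> locs B)"

definition sat_tpc :: "('l, 'a, 'x) ta \<Rightarrow> 'l \<Rightarrow> 'x val \<Rightarrow> bool" where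
  "sat_tpc B l v \<longleftrightarrow> (\<forall>(x, c)\<in>tpc B l. v x \<le> of_int c)"

inductive reach :: "('l, 'a, 'x) ta \<Rightarrow> 'l \<Rightarrow> 'x val \<Rightarrow> bool" for B where
  init: "sat v (init_cc B) \<Longrightarrow> (\<forall>x. 0 \<le> v x) \<Longrightarrow> reach B (init_loc B) v"
| time: "reach B l v \<Longrightarrow> 0 \<le> d \<Longrightarrow> (\<forall>t. 0 \<le> t \<and> t \<le> d \<longrightarrow> sat_tpc B l (delay v t))
          \<Longrightarrow> reach B l (delay v d)"
| disc: "reach B l v \<Longrightarrow> (l, a, g, r, l') \<in> edges B \<Longrightarrow> sat v g \<Longrightarrow> sat_tpc B l' (reset r v)
          \<Longrightarrow> reach B l' (reset r v)"

definition invariant :: "('l, 'a, 'x) ta \<Rightarrow> ('l \<Rightarrow> 'x val \<Rightarrow> bool) \<Rightarrow> bool" where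
  "invariant B P \<longleftrightarrow> (\<forall>l v. reach B l v \<longrightarrow> P l v)"

datatype ('x, 'a) hclk = Cl 'x | H0 | Hact 'a

definition hist :: "('l, 'a, 'x) ta \<Rightarrow> ('l, 'a, ('x, 'a) hclk) ta" where
  "hist B = \<lparr> locs = locs B, acts = acts B,
     clks = Cl ` clks B \<union> {H0} \<union> Hact ` acts B,
     edges = {(l, a, map_atom Cl ` g, Cl ` r \<union> {Hact a}, l') | l a g r l'. (l, a, g, r, l') \<in> edges B},
     tpc = (\<lambda>l. (\<lambda>(x, c). (Cl x, c)) ` tpc B l),
     init_loc = init_loc B,
     init_cc = map_atom Cl ` init_cc B \<union> {Atom H0 REq 0} \<union> {Atom (Hact a) RGt 0 | a. a \<in> acts B} \<rparr>"

type_synonym 'x zone = "'x val set"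

definition zup :: "('l, 'a, 'x) ta \<Rightarrow> 'l \<Rightarrow> 'x zone \<Rightarrow> 'x zone" where
  "zup B l Z = Z \<union> {delay v d | v d. v \<in> Z \<and> 0 \<le> d \<and> (\<forall>t. 0 \<le> t \<and> t \<le> d \<longrightarrow> sat_tpc B l (delay v t))}"

definition zpost :: "('l, 'a, 'x) ta \<Rightarrow> 'x cc \<Rightarrow> 'x set \<Rightarrow> 'l \<Rightarrow> 'x zone \<Rightarrow> 'x zone" where
  "zpost B g r l' Z = {reset r v | v. v \<in> Z \<and> sat v g \<and> sat_tpc B l' (reset r v)}"

inductive zreach :: "('l, 'a, 'x) ta \<Rightarrow> ('x zone \<Rightarrow> 'x zone) \<Rightarrow> 'l \<Rightarrow> 'x zone \<Rightarrow> bool"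
  for B nrm where
  zinit: "zreach B nrm (init_loc B) (nrm (zup B (init_loc B) {v. sat v (init_cc B) \<and> (\<forall>x. 0 \<le> v x)}))"
| zstep: "zreach B nrm l Z \<Longrightarrow> (l, a, g, r, l') \<in> edges B
           \<Longrightarrow> zreach B nrm l' (nrm (zup B l' (zpost B g r l' Z)))"

text \<open>CI(B): disjunction of at(l) and zeta over reachable symbolic states; zeta constrains only the
  clocks of B, so the valuation is compared on clks B only.\<close>
definition CI :: "('l, 'a, 'x) ta \<Rightarrow> ('x zone \<Rightarrow> 'x zone) \<Rightarrow> 'l \<Rightarrow> 'x val \<Rightarrow> bool" where
  "CI B nrm l v \<longleftrightarrow> (\<exists>Z. zreach B nrm l Z \<and> (\<exists>u\<in>Z. \<forall>x\<in>clks B. u x = v x))"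

definition participants :: "('l, 'a, 'x) ta list \<Rightarrow> 'a set \<Rightarrow> nat set" where
  "participants Bs \<alpha> = {i. i < length Bs \<and> \<alpha> \<inter> acts (Bs ! i) \<noteq> {}}"

definition is_interaction :: "('l, 'a, 'x) ta list \<Rightarrow> 'a set \<Rightarrow> bool" where
  "is_interaction Bs \<alpha> \<longleftrightarrow> \<alpha> \<noteq> {} \<and> \<alpha> \<subseteq> (\<Union>i<length Bs. acts (Bs ! i))
     \<and> (\<forall>i<length Bs. \<forall>a\<in>\<alpha>. \<forall>b\<in>\<alpha>. a \<in> acts (Bs ! i) \<and> b \<in> acts (Bs ! i) \<longrightarrow> a = b)"

definition sys_locs :: "('l, 'a, 'x) ta list \<Rightarrow> 'l list set" where
  "sys_locs Bs = {ls. length ls = length Bs \<and> (\<forall>i<length Bs. ls ! i \<in> locs (Bs ! i))}"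

definition sys :: "('l, 'a, 'x) ta list \<Rightarrow> 'a set set \<Rightarrow> ('l list, 'a set, 'x) ta" where
  "sys Bs \<gamma> = \<lparr> locs = sys_locs Bs, acts = \<gamma>,
     clks = (\<Union>i<length Bs. clks (Bs ! i)),
     edges = {(ls, \<alpha>, g, r, ls') | ls \<alpha> g r ls'. \<alpha> \<in> \<gamma> \<and> ls \<in> sys_locs Bs \<and>
        (\<exists>es :: nat \<Rightarrow> ('l \<times> 'a \<times> 'x cc \<times> 'x set \<times> 'l).
           (\<forall>i\<in>participants Bs \<alpha>. es i \<in> edges (Bs ! i) \<and> src (es i) = ls ! i \<and> lab (es i) \<in> \<alpha>)
           \<and> g = (\<Union>i\<in>participants Bs \<alpha>. grd (es i))
           \<and> r = (\<Union>i\<in>participants Bs \<alpha>. rst (es i))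
           \<and> ls' = map (\<lambda>i. if i \<in> participants Bs \<alpha> then tgt (es i) else ls ! i) [0..<length Bs])},
     tpc = (\<lambda>ls. \<Union>i<length Bs. tpc (Bs ! i) (ls ! i)),
     init_loc = map init_loc Bs,
     init_cc = (\<Union>i<length Bs. init_cc (Bs ! i)) \<rparr>"

definition pn_places :: "('l, 'a, 'x) ta list \<Rightarrow> (nat \<times> 'l) set" where
  "pn_places Bs = {(i, l). i < length Bs \<and> l \<in> locs (Bs ! i)}"

definition pn_trans :: "('l, 'a, 'x) ta list \<Rightarrow> 'a set set \<Rightarrow> ((nat \<times> 'l) set \<times> (nat \<times> 'l) set) set" where
  "pn_trans Bs \<gamma> = {(pre, post) | pre post. \<exists>\<alpha>\<in>\<gamma>.
      \<exists>es :: nat \<Rightarrow> ('l \<times> 'a \<times> 'x cc \<times> 'x set \<times> 'l).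
        (\<forall>i\<in>participants Bs \<alpha>. es i \<in> edges (Bs ! i) \<and> lab (es i) \<in> \<alpha>)
        \<and> pre = {(i, src (es i)) | i. i \<in> participants Bs \<alpha>}
        \<and> post = {(i, tgt (es i)) | i. i \<in> participants Bs \<alpha>}}"

definition trap :: "('l, 'a, 'x) ta list \<Rightarrow> 'a set set \<Rightarrow> (nat \<times> 'l) set \<Rightarrow> bool" where
  "trap Bs \<gamma> S \<longleftrightarrow> S \<subseteq> pn_places Bs \<and>
     (\<forall>(pre, post)\<in>pn_trans Bs \<gamma>. pre \<inter> S \<noteq> {} \<longrightarrow> post \<inter> S \<noteq> {})"

definition init_marked :: "('l, 'a, 'x) ta list \<Rightarrow> (nat \<times> 'l) set \<Rightarrow> bool" where
  "init_marked Bs S \<longleftrightarrow> (\<exists>i<length Bs. (i, init_loc (Bs ! i)) \<in> S)"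

definition II :: "('l, 'a, 'x) ta list \<Rightarrow> 'a set set \<Rightarrow> 'l list \<Rightarrow> bool" where
  "II Bs \<gamma> ls \<longleftrightarrow> (\<forall>S. trap Bs \<gamma> S \<and> init_marked Bs S \<longrightarrow> (\<exists>(i, l)\<in>S. ls ! i = l))"

definition Act :: "'a set set \<Rightarrow> 'a set" where
  "Act \<gamma> = \<Union>\<gamma>"

definition ominus :: "'a set set \<Rightarrow> 'a set \<Rightarrow> 'a set set" where
  "ominus \<gamma> \<alpha> = {\<beta> - \<alpha> | \<beta>. \<beta> \<in> \<gamma> \<and> \<not> \<beta> \<subseteq> \<alpha>}"

text \<open>E(gamma), evaluated on the history-clock values h a (for finite gamma this coincides with
  the recursive definition).\<close>
inductive EE :: "'a set set \<Rightarrow> ('a \<Rightarrow> real) \<Rightarrow> bool" where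
  E_empty: "EE {} h"
| E_step: "\<alpha> \<in> \<gamma> \<Longrightarrow> (\<forall>a\<in>\<alpha>. \<forall>b\<in>\<alpha>. h a = h b) \<Longrightarrow> (\<forall>a\<in>\<alpha>. \<forall>b\<in>Act (ominus \<gamma> \<alpha>). h a \<le> h b)
     \<Longrightarrow> EE (ominus \<gamma> \<alpha>) h \<Longrightarrow> EE \<gamma> h"

definition Phi :: "('l, 'a, 'x) ta list \<Rightarrow> 'a set set \<Rightarrow> (nat \<Rightarrow> ('x, 'a) hclk zone \<Rightarrow> ('x, 'a) hclk zone)
                   \<Rightarrow> 'l list \<Rightarrow> 'x val \<Rightarrow> bool" where
  "Phi Bs \<gamma> nrm ls v \<longleftrightarrow> (\<exists>w :: ('x, 'a) hclk val.
      (\<forall>x. w (Cl x) = v x) \<and> 0 \<le> w H0 \<and> (\<forall>a\<in>(\<Union>i<length Bs. acts (Bs ! i)). 0 \<le> w (Hact a))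
      \<and> (\<forall>i<length Bs. CI (hist (Bs ! i)) (nrm i) (ls ! i) w)
      \<and> II Bs \<gamma> ls
      \<and> EE \<gamma> (\<lambda>a. w (Hact a)))"

end

theory Submission imports Defs begin

fun idx :: "'a set list \<Rightarrow> 'a \<Rightarrow> nat" where
  "idx [] a = 0"
| "idx (\<beta> # s) a = (if a \<in> \<beta> then 0 else Suc (idx s a))"

lemma ominus_ominus: "ominus (ominus \<gamma> U) \<alpha> = ominus \<gamma> (U \<union> \<alpha>)"
proof (rule set_eqI, rule iffI)
  fix x assume "x \<in> ominus (ominus \<gamma> U) \<alpha>"
  then obtain \<beta> where "x = \<beta> - U - \<alpha>" "\<beta> \<in> \<gamma>" "\<not> \<beta> \<subseteq> U" "\<not> \<beta> - U \<subseteq> \<alpha>"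
    unfolding ominus_def by blast
  then show "x \<in> ominus \<gamma> (U \<union> \<alpha>)" unfolding ominus_def
    by (intro CollectI exI[of _ \<beta>]) blast
next
  fix x assume "x \<in> ominus \<gamma> (U \<union> \<alpha>)"
  then obtain \<beta> where "x = \<beta> - (U \<union> \<alpha>)" "\<beta> \<in> \<gamma>" "\<not> \<beta> \<subseteq> U \<union> \<alpha>"
    unfolding ominus_def by blast
  moreover have "\<beta> - U \<in> ominus \<gamma> U" using calculation unfolding ominus_def by blast
  ultimately show "x \<in> ominus (ominus \<gamma> U) \<alpha>" unfolding ominus_def
    by (intro CollectI exI[of _ "\<beta> - U"]) blast
qed

lemma Act_ominus: "Act (ominus \<gamma> U) = Act \<gamma> - U"
  unfolding Act_def ominus_def by auto

lemma EE_const: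
  "finite (Act \<gamma> - U) \<Longrightarrow> (\<forall>a\<in>Act \<gamma> - U. h a = c) \<Longrightarrow> EE (ominus \<gamma> U) h"
proof (induction "card (Act \<gamma> - U)" arbitrary: U rule: less_induct)
  case less
  show ?case
  proof (cases "ominus \<gamma> U = {}")
    case True then show ?thesis by (simp add: EE.E_empty)
  next
    case False
    then obtain x where x: "x \<in> ominus \<gamma> U" by blast
    then have xne: "x \<noteq> {}" and xsub: "x \<subseteq> Act \<gamma> - U"
      unfolding ominus_def Act_def by auto
    have sub: "Act \<gamma> - (U \<union> x) \<subset> Act \<gamma> - U" using xne xsub by blast
    have lt: "card (Act \<gamma> - (U \<union> x)) < card (Act \<gamma> - U)"
      by (rule psubset_card_mono[OF less.prems(1) sub])
    have fin: "finite (Act \<gamma> - (U \<union> x))"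
      using less.prems(1) sub by (meson finite_subset psubset_imp_subset)
    have hc: "\<forall>a\<in>Act \<gamma> - (U \<union> x). h a = c" using less.prems(2) by blast
    have IH: "EE (ominus \<gamma> (U \<union> x)) h"
      by (rule less.hyps[OF lt fin hc])
    show ?thesis
    proof (rule EE.E_step[of x])
      show "x \<in> ominus \<gamma> U" by (rule x)
      show "\<forall>a\<in>x. \<forall>b\<in>x. h a = h b" using xsub less.prems(2) by (metis subsetD)
      show "\<forall>a\<in>x. \<forall>b\<in>Act (ominus (ominus \<gamma> U) x). h a \<le> h b"
        using xsub less.prems(2) unfolding ominus_ominus Act_ominus
        by (metis Diff_iff Un_iff order_refl subsetD)
      show "EE (ominus (ominus \<gamma> U) x) h" using IH by (simp add: ominus_ominus)
    qed
  qed
qed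

lemma EE_hist:
  "set s \<subseteq> \<gamma> \<Longrightarrow> finite (Act \<gamma> - U) \<Longrightarrow> mono (f :: nat \<Rightarrow> real)
   \<Longrightarrow> (\<forall>a\<in>Act \<gamma> - U. h a = f (idx s a)) \<Longrightarrow> EE (ominus \<gamma> U) h"
proof (induction s arbitrary: U f)
  case Nil
  then show ?case by (intro EE_const[where c="f 0"]) auto
next
  case (Cons \<beta> s)
  have m: "mono (\<lambda>n. f (Suc n))" using Cons.prems(3) unfolding mono_def by simp
  have b: "\<beta> \<in> \<gamma>" and ss: "set s \<subseteq> \<gamma>" using Cons.prems(1) by auto
  show ?case
  proof (cases "\<beta> \<subseteq> U")
    case True
    have "\<forall>a\<in>Act \<gamma> - U. h a = f (Suc (idx s a))"
    proof
      fix a assume a: "a \<in> Act \<gamma> - U"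
      then have "a \<notin> \<beta>" using True by blast
      then show "h a = f (Suc (idx s a))" using Cons.prems(4) a by simp
    qed
    then show ?thesis using Cons.IH[OF ss Cons.prems(2) m] by simp
  next
    case False
    define \<alpha> where "\<alpha> = \<beta> - U"
    have a: "\<alpha> \<in> ominus \<gamma> U" using b False unfolding \<alpha>_def ominus_def by blast
    have asub: "\<alpha> \<subseteq> Act \<gamma> - U" using b unfolding \<alpha>_def Act_def by auto
    have U: "U \<union> \<alpha> = U \<union> \<beta>" unfolding \<alpha>_def by blast
    have fin: "finite (Act \<gamma> - (U \<union> \<beta>))" using Cons.prems(2) by (rule finite_subset[rotated]) blast
    have h0: "\<forall>a\<in>\<alpha>. h a = f 0"
    proof
      fix a assume "a \<in> \<alpha>"
      then have "a \<in> Act \<gamma> - U" "a \<in> \<beta>" using asub unfolding \<alpha>_def by auto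
      then show "h a = f 0" using Cons.prems(4) by simp
    qed
    have hS: "\<forall>a\<in>Act \<gamma> - (U \<union> \<beta>). h a = f (Suc (idx s a))"
    proof
      fix a assume a: "a \<in> Act \<gamma> - (U \<union> \<beta>)"
      then have "a \<notin> \<beta>" "a \<in> Act \<gamma> - U" by auto
      then show "h a = f (Suc (idx s a))" using Cons.prems(4) by simp
    qed
    have IH: "EE (ominus \<gamma> (U \<union> \<beta>)) h"
      using Cons.IH[OF ss fin m] hS by simp
    show ?thesis
    proof (rule EE.E_step[of \<alpha>])
      show "\<alpha> \<in> ominus \<gamma> U" by (rule a)
      show "\<forall>a\<in>\<alpha>. \<forall>b\<in>\<alpha>. h a = h b" using h0 by simp
      show "\<forall>a\<in>\<alpha>. \<forall>b\<in>Act (ominus (ominus \<gamma> U) \<alpha>). h a \<le> h b"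
      proof (intro ballI)
        fix a b assume "a \<in> \<alpha>" "b \<in> Act (ominus (ominus \<gamma> U) \<alpha>)"
        then have "h a = f 0" "b \<in> Act \<gamma> - (U \<union> \<beta>)" using h0 U by (auto simp: Act_ominus)
        moreover have "f 0 \<le> f (Suc (idx s b))" using Cons.prems(3) by (simp add: monoD)
        ultimately show "h a \<le> h b" using hS by simp
      qed
      show "EE (ominus (ominus \<gamma> U) \<alpha>) h" using IH by (simp add: ominus_ominus U)
    qed
  qed
qed


lemma sat_atom_map: "sat_atom u (map_atom f t) = sat_atom (\<lambda>x. u (f x)) t"
  by (cases t) auto

lemma sat_atom_cong: "(\<forall>x\<in>atom_clks t. u x = v x) \<Longrightarrow> sat_atom u t = sat_atom v t"
  by (cases t) auto

lemma sat_tpc_hist: "sat_tpc (hist B) l u = sat_tpc B l (\<lambda>x. u (Cl x))"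
  unfolding sat_tpc_def hist_def by auto

lemma sat_tpc_cong: "(\<forall>x\<in>fst ` tpc B l. u x = v x) \<Longrightarrow> sat_tpc B l u = sat_tpc B l v"
  unfolding sat_tpc_def by force

lemma sat_tpc_sys: "sat_tpc (sys Bs \<gamma>) l v = (\<forall>i<length Bs. sat_tpc (Bs!i) (l!i) v)"
  unfolding sat_tpc_def sys_def by auto

lemma delay_delay: "delay (delay v a) b = delay v (a + b)"
  by (simp add: delay_def add.assoc)

lemma hist_simps:
  "clks (hist B) = Cl ` clks B \<union> {H0} \<union> Hact ` acts B"
  "init_loc (hist B) = init_loc B"
  "init_cc (hist B) = map_atom Cl ` init_cc B \<union> {Atom H0 REq 0} \<union> {Atom (Hact a) RGt 0 | a. a \<in> acts B}"
  by (simp_all add: hist_def)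

lemma hist_edge:
  assumes "e \<in> edges B"
  shows "(src e, lab e, map_atom Cl ` grd e, Cl ` rst e \<union> {Hact (lab e)}, tgt e) \<in> edges (hist B)"
proof -
  obtain l a g r l' where e: "e = (l, a, g, r, l')" by (cases e) auto
  show ?thesis using assms unfolding e hist_def src_def lab_def grd_def rst_def tgt_def by auto
qed

lemma zup_time:
  assumes "w \<in> zup B l Z" "0 \<le> d" "\<forall>t. 0 \<le> t \<and> t \<le> d \<longrightarrow> sat_tpc B l (delay w t)"
  shows "delay w d \<in> zup B l Z"
proof -
  from assms(1) consider "w \<in> Z"
    | v d0 where "w = delay v d0" "v \<in> Z" "0 \<le> d0" "\<forall>t. 0 \<le> t \<and> t \<le> d0 \<longrightarrow> sat_tpc B l (delay v t)"
    unfolding zup_def by blast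
  then show ?thesis
  proof cases
    case 1 then show ?thesis using assms unfolding zup_def by blast
  next
    case 2
    have "\<forall>t. 0 \<le> t \<and> t \<le> d0 + d \<longrightarrow> sat_tpc B l (delay v t)"
    proof (intro allI impI)
      fix t assume t: "0 \<le> t \<and> t \<le> d0 + d"
      show "sat_tpc B l (delay v t)"
      proof (cases "t \<le> d0")
        case True then show ?thesis using 2 t by blast
      next
        case False
        then have "sat_tpc B l (delay w (t - d0))" using assms(3) t by auto
        then show ?thesis using 2 by (simp add: delay_delay)
      qed
    qed
    then have "delay v (d0 + d) \<in> zup B l Z" using 2 assms(2) unfolding zup_def by force
    then show ?thesis using 2 by (simp add: delay_delay)
  qed
qed

lemma reach_zone:
  assumes "reach B l w" "\<forall>Z. Z \<subseteq> nrm Z"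
  shows "\<exists>Z'. zreach B nrm l (nrm (zup B l Z')) \<and> w \<in> zup B l Z'"
  using assms(1)
proof induction
  case (init v)
  have "zreach B nrm (init_loc B) (nrm (zup B (init_loc B) {v. sat v (init_cc B) \<and> (\<forall>x. 0 \<le> v x)}))"
    by (rule zreach.zinit)
  moreover have "v \<in> zup B (init_loc B) {v. sat v (init_cc B) \<and> (\<forall>x. 0 \<le> v x)}"
    using init unfolding zup_def by blast
  ultimately show ?case by blast
next
  case (time l v d)
  then obtain Z' where z: "zreach B nrm l (nrm (zup B l Z'))" "v \<in> zup B l Z'" by blast
  have d: "0 \<le> d" and tp: "\<forall>t. 0 \<le> t \<and> t \<le> d \<longrightarrow> sat_tpc B l (delay v t)" using time by auto
  have "delay v d \<in> zup B l Z'" by (rule zup_time[OF z(2) d tp])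
  then show ?case using z(1) by blast
next
  case (disc l v a g r l')
  from disc.IH obtain Z' where z: "zreach B nrm l (nrm (zup B l Z'))" "v \<in> zup B l Z'" by blast
  have e: "(l, a, g, r, l') \<in> edges B" and sg: "sat v g" and st: "sat_tpc B l' (reset r v)"
    using disc by auto
  define Z where "Z = nrm (zup B l Z')"
  have "v \<in> Z" using z assms(2) unfolding Z_def by blast
  then have "reset r v \<in> zpost B g r l' Z" using sg st unfolding zpost_def by blast
  then have "reset r v \<in> zup B l' (zpost B g r l' Z)" unfolding zup_def by blast
  moreover have "zreach B nrm l' (nrm (zup B l' (zpost B g r l' Z)))"
    using zreach.zstep[OF z(1)[folded Z_def] e] by blast
  ultimately show ?case by blast
qed

lemma CI_of_reach:
  assumes "reach B l u" "\<forall>Z. Z \<subseteq> nrm Z" "\<forall>c\<in>clks B. u c = w c"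
  shows "CI B nrm l w"
proof -
  obtain Z' where "zreach B nrm l (nrm (zup B l Z'))" "u \<in> zup B l Z'"
    using reach_zone[OF assms(1,2)] by blast
  moreover then have "u \<in> nrm (zup B l Z')" using assms(2) by blast
  ultimately show ?thesis unfolding CI_def using assms(3) by blast
qed


lemma sys_edge:
  assumes "(l, \<alpha>, g, r, l') \<in> edges (sys Bs \<gamma>)"
  shows "\<alpha> \<in> \<gamma> \<and> (\<exists>es. (\<forall>i\<in>participants Bs \<alpha>. es i \<in> edges (Bs ! i) \<and> src (es i) = l ! i \<and> lab (es i) \<in> \<alpha>)
     \<and> g = (\<Union>i\<in>participants Bs \<alpha>. grd (es i)) \<and> r = (\<Union>i\<in>participants Bs \<alpha>. rst (es i))
     \<and> l' = map (\<lambda>i. if i \<in> participants Bs \<alpha> then tgt (es i) else l ! i) [0..<length Bs])"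
  using assms unfolding sys_def by simp

lemma sys_simps:
  "init_loc (sys Bs \<gamma>) = map init_loc Bs"
  "init_cc (sys Bs \<gamma>) = (\<Union>i<length Bs. init_cc (Bs ! i))"
  by (simp_all add: sys_def)

lemma wf_edge:
  assumes "wf_ta B" "e \<in> edges B"
  shows "lab e \<in> acts B" "cc_clks (grd e) \<subseteq> clks B" "rst e \<subseteq> clks B"
  using assms unfolding wf_ta_def by auto

lemma wf_tpc: "wf_ta B \<Longrightarrow> fst ` tpc B l \<subseteq> clks B"
  unfolding wf_ta_def by auto


definition INV :: "('l, 'a, 'x) ta list \<Rightarrow> 'a set set \<Rightarrow> 'l list \<Rightarrow> 'x val \<Rightarrow> bool" where
  "INV Bs \<gamma> ls v \<longleftrightarrow> (\<exists>(w :: ('x, 'a) hclk val) s (f :: nat \<Rightarrow> real).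
     (\<forall>x. w (Cl x) = v x) \<and> 0 \<le> w H0 \<and> (\<forall>a. w (Hact a) = f (idx s a)) \<and> mono f \<and> 0 \<le> f 0
     \<and> set s \<subseteq> \<gamma>
     \<and> (\<forall>i<length Bs. \<exists>u. reach (hist (Bs!i)) (ls!i) u \<and> (\<forall>c\<in>clks (hist (Bs!i)). u c = w c))
     \<and> II Bs \<gamma> ls)"

lemma INVI:
  fixes w :: "('x, 'a) hclk val" and f :: "nat \<Rightarrow> real" and Bs :: "('l, 'a, 'x) ta list"
  assumes "\<forall>x. w (Cl x) = v x" "0 \<le> w H0" "\<forall>a. w (Hact a) = f (idx s a)" "mono f" "0 \<le> f 0"
    "set s \<subseteq> \<gamma>"
    "\<forall>i<length Bs. \<exists>u. reach (hist (Bs!i)) (ls!i) u \<and> (\<forall>c\<in>clks (hist (Bs!i)). u c = w c)"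
    "II Bs \<gamma> ls"
  shows "INV Bs \<gamma> ls v"
  unfolding INV_def using assms by blast

lemma INV_init:
  fixes Bs :: "('l, 'a, 'x) ta list"
  assumes v0: "\<forall>x. 0 \<le> v x" and sv: "sat v (\<Union>i<length Bs. init_cc (Bs!i))"
  shows "INV Bs \<gamma> (map init_loc Bs) v"
proof -
  define w :: "('x,'a) hclk val" where "w = (\<lambda>c. case c of Cl x \<Rightarrow> v x | H0 \<Rightarrow> 0 | Hact a \<Rightarrow> 1)"
  have wCl: "(\<lambda>x. w (Cl x)) = v" by (simp add: w_def)
  have comp: "\<forall>i<length Bs. \<exists>u. reach (hist (Bs!i)) (map init_loc Bs ! i) u \<and> (\<forall>c\<in>clks (hist (Bs!i)). u c = w c)"
  proof (intro allI impI)
    fix i assume i: "i < length Bs"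
    have "sat w (init_cc (hist (Bs!i)))"
      unfolding sat_def
    proof
      fix t assume t: "t \<in> init_cc (hist (Bs!i))"
      from t consider (a) t0 where "t = map_atom Cl t0" "t0 \<in> init_cc (Bs!i)" | (b) "t = Atom H0 REq 0"
        | (c) a where "t = Atom (Hact a) RGt 0" unfolding hist_simps by blast
      then show "sat_atom w t"
      proof cases
        case a
        then have "sat_atom v t0" using sv i unfolding sat_def by blast
        then show ?thesis using a wCl by (simp add: sat_atom_map)
      next
        case b then show ?thesis by (simp add: w_def)
      next
        case c then show ?thesis by (simp add: w_def)
      qed
    qed
    moreover have "\<forall>c. 0 \<le> w c" using v0 by (auto simp: w_def split: hclk.split)
    ultimately have "reach (hist (Bs!i)) (init_loc (hist (Bs!i))) w" by (rule reach.init)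
    then have "reach (hist (Bs!i)) (map init_loc Bs ! i) w" using i by (simp add: hist_simps)
    then show "\<exists>u. reach (hist (Bs!i)) (map init_loc Bs ! i) u \<and> (\<forall>c\<in>clks (hist (Bs!i)). u c = w c)"
      by blast
  qed
  have ii: "II Bs \<gamma> (map init_loc Bs)"
    unfolding II_def
  proof (intro allI impI)
    fix S assume "trap Bs \<gamma> S \<and> init_marked Bs S"
    then obtain i where i: "i < length Bs" "(i, init_loc (Bs!i)) \<in> S" unfolding init_marked_def by blast
    then show "\<exists>(i, l)\<in>S. map init_loc Bs ! i = l" by (intro bexI[of _ "(i, init_loc (Bs!i))"]) auto
  qed
  show ?thesis
    by (rule INVI[where w=w and s="[]" and f="\<lambda>_. 1"]) (use comp ii in \<open>auto simp: w_def mono_def\<close>)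
qed


lemma INV_time:
  fixes Bs :: "('l, 'a, 'x) ta list"
  assumes wf: "\<forall>i<length Bs. wf_ta (Bs ! i)"
    and I: "INV Bs \<gamma> l v" and d: "0 \<le> d"
    and tp: "\<forall>t. 0 \<le> t \<and> t \<le> d \<longrightarrow> sat_tpc (sys Bs \<gamma>) l (delay v t)"
  shows "INV Bs \<gamma> l (delay v d)"
proof -
  from I obtain w :: "('x, 'a) hclk val" and s and f :: "nat \<Rightarrow> real" where
    W: "\<forall>x. w (Cl x) = v x" "0 \<le> w H0" "\<forall>a. w (Hact a) = f (idx s a)" "mono f" "0 \<le> f 0"
    "set s \<subseteq> \<gamma>"
    "\<forall>i<length Bs. \<exists>u. reach (hist (Bs!i)) (l!i) u \<and> (\<forall>c\<in>clks (hist (Bs!i)). u c = w c)"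
    "II Bs \<gamma> l"
    using I unfolding INV_def apply (elim exE conjE) apply (rule that) apply assumption+ done
  have comp: "\<forall>i<length Bs. \<exists>u. reach (hist (Bs!i)) (l!i) u \<and> (\<forall>c\<in>clks (hist (Bs!i)). u c = delay w d c)"
  proof (intro allI impI)
    fix i assume i: "i < length Bs"
    obtain u where u: "reach (hist (Bs!i)) (l!i) u" "\<forall>c\<in>clks (hist (Bs!i)). u c = w c"
      using W(7) i by meson
    have tsub: "fst ` tpc (Bs!i) (l!i) \<subseteq> clks (Bs!i)" using wf i by (simp add: wf_tpc)
    have tpu: "\<forall>t. 0 \<le> t \<and> t \<le> d \<longrightarrow> sat_tpc (hist (Bs!i)) (l!i) (delay u t)"
    proof (intro allI impI)
      fix t assume t: "0 \<le> t \<and> t \<le> d"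
      have "sat_tpc (sys Bs \<gamma>) l (delay v t)" using tp t by blast
      then have s1: "sat_tpc (Bs!i) (l!i) (delay v t)" using i by (simp add: sat_tpc_sys)
      have ag: "\<forall>x\<in>fst ` tpc (Bs!i) (l!i). delay u t (Cl x) = delay v t x"
      proof
        fix x assume "x \<in> fst ` tpc (Bs!i) (l!i)"
        then have "x \<in> clks (Bs!i)" using tsub by blast
        then have "Cl x \<in> clks (hist (Bs!i))" by (simp add: hist_simps)
        then show "delay u t (Cl x) = delay v t x" using u(2) W(1) by (simp add: delay_def)
      qed
      have "sat_tpc (Bs!i) (l!i) (\<lambda>x. delay u t (Cl x)) = sat_tpc (Bs!i) (l!i) (delay v t)"
        by (rule sat_tpc_cong) (use ag in simp)
      then have "sat_tpc (Bs!i) (l!i) (\<lambda>x. delay u t (Cl x))" using s1 by simp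
      then show "sat_tpc (hist (Bs!i)) (l!i) (delay u t)" by (simp add: sat_tpc_hist)
    qed
    have "reach (hist (Bs!i)) (l!i) (delay u d)" by (rule reach.time[OF u(1) d tpu])
    moreover have "\<forall>c\<in>clks (hist (Bs!i)). delay u d c = delay w d c" using u(2) by (simp add: delay_def)
    ultimately show "\<exists>u. reach (hist (Bs!i)) (l!i) u \<and> (\<forall>c\<in>clks (hist (Bs!i)). u c = delay w d c)"
      by blast
  qed
  show ?thesis
  proof (rule INVI[where w="delay w d" and s=s and f="\<lambda>n. f n + d"])
    show "\<forall>x. delay w d (Cl x) = delay v d x" using W(1) by (simp add: delay_def)
    show "0 \<le> delay w d H0" using W(2) d by (simp add: delay_def)
    show "\<forall>a. delay w d (Hact a) = f (idx s a) + d" using W(3) by (simp add: delay_def)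
    show "mono (\<lambda>n. f n + d)" using W(4) by (simp add: mono_def)
    show "0 \<le> f 0 + d" using W(5) d by simp
    show "set s \<subseteq> \<gamma>" by (rule W(6))
    show "\<forall>i<length Bs. \<exists>u. reach (hist (Bs!i)) (l!i) u \<and> (\<forall>c\<in>clks (hist (Bs!i)). u c = delay w d c)"
      by (rule comp)
    show "II Bs \<gamma> l" by (rule W(8))
  qed
qed


lemma INV_disc:
  fixes Bs :: "('l, 'a, 'x) ta list"
  assumes wf: "\<forall>i<length Bs. wf_ta (Bs ! i)"
    and dclks: "\<forall>i<length Bs. \<forall>j<length Bs. i \<noteq> j \<longrightarrow> clks (Bs ! i) \<inter> clks (Bs ! j) = {}"
    and inter: "\<forall>\<alpha>\<in>\<gamma>. is_interaction Bs \<alpha>"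
    and I: "INV Bs \<gamma> l v"
    and edge: "(l, \<alpha>, g, r, l') \<in> edges (sys Bs \<gamma>)"
    and sg: "sat v g" and st: "sat_tpc (sys Bs \<gamma>) l' (reset r v)"
  shows "INV Bs \<gamma> l' (reset r v)"
proof -
  from I obtain w :: "('x, 'a) hclk val" and s and f :: "nat \<Rightarrow> real" where
    W: "\<forall>x. w (Cl x) = v x" "0 \<le> w H0" "\<forall>a. w (Hact a) = f (idx s a)" "mono f" "0 \<le> f 0"
    "set s \<subseteq> \<gamma>"
    "\<forall>i<length Bs. \<exists>u. reach (hist (Bs!i)) (l!i) u \<and> (\<forall>c\<in>clks (hist (Bs!i)). u c = w c)"
    "II Bs \<gamma> l"
    using I unfolding INV_def apply (elim exE conjE) apply (rule that) apply assumption+ done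
  define P where "P = participants Bs \<alpha>"
  have SE: "\<alpha> \<in> \<gamma> \<and> (\<exists>es. (\<forall>i\<in>P. es i \<in> edges (Bs ! i) \<and> src (es i) = l ! i \<and> lab (es i) \<in> \<alpha>)
     \<and> g = (\<Union>i\<in>P. grd (es i)) \<and> r = (\<Union>i\<in>P. rst (es i))
     \<and> l' = map (\<lambda>i. if i \<in> P then tgt (es i) else l ! i) [0..<length Bs])"
    unfolding P_def by (rule sys_edge[OF edge])
  then have a\<gamma>: "\<alpha> \<in> \<gamma>" by (rule conjunct1)
  from SE obtain es where es: "\<forall>i\<in>P. es i \<in> edges (Bs ! i) \<and> src (es i) = l ! i \<and> lab (es i) \<in> \<alpha>"
    and gdef: "g = (\<Union>i\<in>P. grd (es i))" and rdef: "r = (\<Union>i\<in>P. rst (es i))"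
    and l'def: "l' = map (\<lambda>i. if i \<in> P then tgt (es i) else l ! i) [0..<length Bs]"
    by blast
  have Pdef: "\<And>i. i \<in> P \<longleftrightarrow> i < length Bs \<and> \<alpha> \<inter> acts (Bs!i) \<noteq> {}"
    unfolding P_def participants_def by simp
  have l'i: "\<And>i. i < length Bs \<Longrightarrow> l' ! i = (if i \<in> P then tgt (es i) else l ! i)"
    unfolding l'def by simp
  have uniq: "\<And>i a b. i < length Bs \<Longrightarrow> a \<in> \<alpha> \<Longrightarrow> b \<in> \<alpha> \<Longrightarrow> a \<in> acts (Bs!i) \<Longrightarrow> b \<in> acts (Bs!i) \<Longrightarrow> a = b"
    using inter a\<gamma> unfolding is_interaction_def by blast
  have rclk: "\<And>i x. i < length Bs \<Longrightarrow> x \<in> clks (Bs!i) \<Longrightarrow> x \<in> r \<longleftrightarrow> (i \<in> P \<and> x \<in> rst (es i))"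
  proof
    fix i x assume i: "i < length Bs" and x: "x \<in> clks (Bs!i)" and xr: "x \<in> r"
    then obtain j where j: "j \<in> P" "x \<in> rst (es j)" unfolding rdef by blast
    have jn: "j < length Bs" using j(1) Pdef by blast
    have "wf_ta (Bs!j)" using wf jn by blast
    then have "rst (es j) \<subseteq> clks (Bs!j)" using es j(1) wf_edge(3) by blast
    then have "x \<in> clks (Bs!j)" using j(2) by blast
    then have "i = j" using dclks i jn x by blast
    then show "i \<in> P \<and> x \<in> rst (es i)" using j by simp
  next
    fix i x assume "i \<in> P \<and> x \<in> rst (es i)"
    then show "x \<in> r" unfolding rdef by blast
  qed
  define w' where "w' = reset (Cl ` r \<union> Hact ` \<alpha>) w"
  define f' :: "nat \<Rightarrow> real" where "f' = (\<lambda>n. case n of 0 \<Rightarrow> 0 | Suc m \<Rightarrow> f m)"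
  have w'Cl: "\<And>x. w' (Cl x) = reset r v x"
    unfolding w'_def reset_def using W(1) by (auto simp: image_iff)
  have w'H0: "w' H0 = w H0" unfolding w'_def reset_def by (auto simp: image_iff)
  have w'H: "\<And>b. w' (Hact b) = (if b \<in> \<alpha> then 0 else w (Hact b))"
    unfolding w'_def reset_def by (auto simp: image_iff)
  have comp: "\<forall>i<length Bs. \<exists>u. reach (hist (Bs!i)) (l'!i) u \<and> (\<forall>c\<in>clks (hist (Bs!i)). u c = w' c)"
  proof (intro allI impI)
    fix i assume i: "i < length Bs"
    obtain u where u: "reach (hist (Bs!i)) (l!i) u" "\<forall>c\<in>clks (hist (Bs!i)). u c = w c"
      using W(7) i by meson
    have wfi: "wf_ta (Bs!i)" using wf i by blast
    show "\<exists>u. reach (hist (Bs!i)) (l'!i) u \<and> (\<forall>c\<in>clks (hist (Bs!i)). u c = w' c)"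
    proof (cases "i \<in> P")
      case True
      define e where "e = es i"
      have e: "e \<in> edges (Bs!i)" "src e = l!i" "lab e \<in> \<alpha>" using es True unfolding e_def by auto
      have labA: "lab e \<in> acts (Bs!i)" by (rule wf_edge(1)[OF wfi e(1)])
      have gclk: "cc_clks (grd e) \<subseteq> clks (Bs!i)" by (rule wf_edge(2)[OF wfi e(1)])
      define u' where "u' = reset (Cl ` rst e \<union> {Hact (lab e)}) u"
      have ag: "\<forall>c\<in>clks (hist (Bs!i)). u' c = w' c"
      proof
        fix c assume c: "c \<in> clks (hist (Bs!i))"
        then consider (cl) x where "c = Cl x" "x \<in> clks (Bs!i)" | (h0) "c = H0"
          | (ha) b where "c = Hact b" "b \<in> acts (Bs!i)" unfolding hist_simps by blast
        then show "u' c = w' c"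
        proof cases
          case cl
          have "x \<in> r \<longleftrightarrow> x \<in> rst e" using rclk[OF i cl(2)] True unfolding e_def by blast
          moreover have "u (Cl x) = v x" using u(2) c cl W(1) by simp
          ultimately show ?thesis using cl w'Cl[of x] unfolding u'_def by (simp add: reset_def image_iff)
        next
          case h0
          then show ?thesis using u(2) c w'H0 unfolding u'_def by (simp add: reset_def image_iff)
        next
          case ha
          have "b = lab e \<longleftrightarrow> b \<in> \<alpha>" using uniq[OF i _ e(3) _ labA] ha(2) e(3) by blast
          then show ?thesis using u(2) c ha w'H unfolding u'_def by (simp add: reset_def image_iff)
        qed
      qed
      have sgu: "sat u (map_atom Cl ` grd e)"
        unfolding sat_def
      proof
        fix t :: "('x, 'a) hclk atom" assume "t \<in> map_atom Cl ` grd e"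
        then obtain t0 where t0: "t = map_atom Cl t0" "t0 \<in> grd e" by blast
        have "t0 \<in> g" unfolding gdef using t0(2) True unfolding e_def by blast
        then have sv: "sat_atom v t0" using sg unfolding sat_def by blast
        have "\<forall>x\<in>atom_clks t0. u (Cl x) = v x"
        proof
          fix x assume "x \<in> atom_clks t0"
          then have "x \<in> clks (Bs!i)" using gclk t0(2) unfolding cc_clks_def by blast
          then have "Cl x \<in> clks (hist (Bs!i))" by (simp add: hist_simps)
          then show "u (Cl x) = v x" using u(2) W(1) by simp
        qed
        then have "sat_atom (\<lambda>x. u (Cl x)) t0 = sat_atom v t0" by (rule sat_atom_cong)
        then show "sat_atom u t" using sv t0(1) by (simp add: sat_atom_map)
      qed
      have l'e: "l'!i = tgt e" using l'i[OF i] True unfolding e_def by simp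
      have stu: "sat_tpc (hist (Bs!i)) (tgt e) u'"
      proof -
        have "sat_tpc (Bs!i) (l'!i) (reset r v)" using st i by (simp add: sat_tpc_sys)
        then have s1: "sat_tpc (Bs!i) (tgt e) (reset r v)" using l'e by simp
        have tsub: "fst ` tpc (Bs!i) (tgt e) \<subseteq> clks (Bs!i)" using wfi by (simp add: wf_tpc)
        have "\<forall>x\<in>fst ` tpc (Bs!i) (tgt e). u' (Cl x) = reset r v x"
        proof
          fix x assume "x \<in> fst ` tpc (Bs!i) (tgt e)"
          then have "x \<in> clks (Bs!i)" using tsub by blast
          then have "Cl x \<in> clks (hist (Bs!i))" by (simp add: hist_simps)
          then show "u' (Cl x) = reset r v x" using ag w'Cl by simp
        qed
        then have "sat_tpc (Bs!i) (tgt e) (\<lambda>x. u' (Cl x)) = sat_tpc (Bs!i) (tgt e) (reset r v)"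
          by (rule sat_tpc_cong)
        then show ?thesis using s1 by (simp add: sat_tpc_hist)
      qed
      have "(l!i, lab e, map_atom Cl ` grd e, Cl ` rst e \<union> {Hact (lab e)}, tgt e) \<in> edges (hist (Bs!i))"
        using hist_edge[OF e(1)] e(2) by simp
      then have "reach (hist (Bs!i)) (tgt e) u'"
        unfolding u'_def by (rule reach.disc[OF u(1) _ sgu stu[unfolded u'_def]])
      then have "reach (hist (Bs!i)) (l'!i) u'" using l'e by simp
      then show ?thesis using ag by blast
    next
      case False
      have l'e: "l'!i = l!i" using l'i[OF i] False by simp
      have ag: "\<forall>c\<in>clks (hist (Bs!i)). u c = w' c"
      proof
        fix c assume c: "c \<in> clks (hist (Bs!i))"
        then consider (cl) x where "c = Cl x" "x \<in> clks (Bs!i)" | (h0) "c = H0"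
          | (ha) b where "c = Hact b" "b \<in> acts (Bs!i)" unfolding hist_simps by blast
        then show "u c = w' c"
        proof cases
          case cl
          have "x \<notin> r" using rclk[OF i cl(2)] False by blast
          moreover have "u (Cl x) = v x" using u(2) c cl W(1) by simp
          ultimately show ?thesis using cl w'Cl[of x] by (simp add: reset_def)
        next
          case h0
          then show ?thesis using u(2) c w'H0 by simp
        next
          case ha
          have "b \<notin> \<alpha>" using Pdef[of i] i False ha(2) by blast
          then show ?thesis using u(2) c ha w'H by simp
        qed
      qed
      have "reach (hist (Bs!i)) (l'!i) u" using u(1) l'e by simp
      then show ?thesis using ag by blast
    qed
  qed
  have ii: "II Bs \<gamma> l'"
    unfolding II_def
  proof (intro allI impI)
    fix S assume S: "trap Bs \<gamma> S \<and> init_marked Bs S"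
    obtain i li where ili: "(i, li) \<in> S" "l!i = li"
      using W(8) S unfolding II_def by blast
    have "S \<subseteq> pn_places Bs" using S unfolding trap_def by blast
    then have i: "i < length Bs" using ili(1) unfolding pn_places_def by blast
    show "\<exists>(i, l)\<in>S. l' ! i = l"
    proof (cases "i \<in> P")
      case False
      then show ?thesis using ili l'i[OF i] by auto
    next
      case True
      define pre where "pre = {(j, src (es j)) | j. j \<in> P}"
      define post where "post = {(j, tgt (es j)) | j. j \<in> P}"
      have ex: "\<exists>es'. (\<forall>i\<in>participants Bs \<alpha>. es' i \<in> edges (Bs!i) \<and> lab (es' i) \<in> \<alpha>)
          \<and> pre = {(i, src (es' i)) | i. i \<in> participants Bs \<alpha>}
          \<and> post = {(i, tgt (es' i)) | i. i \<in> participants Bs \<alpha>}"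
        by (rule exI[of _ es]) (use es in \<open>simp add: pre_def post_def P_def\<close>)
      have "(pre, post) \<in> pn_trans Bs \<gamma>"
        apply (simp only: pn_trans_def mem_Collect_eq)
        using a\<gamma> ex by blast
      moreover have "pre \<inter> S \<noteq> {}"
      proof -
        have "(i, src (es i)) \<in> pre" using True unfolding pre_def by blast
        moreover have "src (es i) = li" using es True ili(2) by simp
        ultimately show ?thesis using ili(1) by blast
      qed
      ultimately have "post \<inter> S \<noteq> {}" using S unfolding trap_def by blast
      then obtain j where j: "j \<in> P" "(j, tgt (es j)) \<in> S" unfolding post_def by blast
      have "j < length Bs" using j(1) Pdef by blast
      then have "l' ! j = tgt (es j)" using l'i j(1) by simp
      then show ?thesis using j(2) by blast
    qed
  qed
  show ?thesis
  proof (rule INVI[where w=w' and s="\<alpha> # s" and f=f'])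
    show "\<forall>x. w' (Cl x) = reset r v x" using w'Cl by simp
    show "0 \<le> w' H0" using W(2) w'H0 by simp
    show "\<forall>a. w' (Hact a) = f' (idx (\<alpha> # s) a)" using W(3) w'H unfolding f'_def by simp
    show "mono f'" unfolding mono_def
    proof (intro allI impI)
      fix m n :: nat assume mn: "m \<le> n"
      show "f' m \<le> f' n"
      proof (cases m)
        case 0
        then show ?thesis
        proof (cases n)
          case (Suc k)
          have "f 0 \<le> f k" using W(4) by (simp add: monoD)
          then show ?thesis using 0 Suc W(5) unfolding f'_def by simp
        qed (simp add: f'_def)
      next
        case (Suc m')
        then obtain n' where n': "n = Suc n'" "m' \<le> n'" using mn by (cases n) auto
        then show ?thesis using Suc W(4) unfolding f'_def by (simp add: monoD)
      qed
    qed
    show "0 \<le> f' 0" unfolding f'_def by simp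
    show "set (\<alpha> # s) \<subseteq> \<gamma>" using W(6) a\<gamma> by simp
    show "\<forall>i<length Bs. \<exists>u. reach (hist (Bs!i)) (l'!i) u \<and> (\<forall>c\<in>clks (hist (Bs!i)). u c = w' c)"
      by (rule comp)
    show "II Bs \<gamma> l'" by (rule ii)
  qed
qed


lemma main_inv:
  fixes Bs :: "('l, 'a, 'x) ta list"
  assumes wf: "\<forall>i<length Bs. wf_ta (Bs ! i)"
    and dclks: "\<forall>i<length Bs. \<forall>j<length Bs. i \<noteq> j \<longrightarrow> clks (Bs ! i) \<inter> clks (Bs ! j) = {}"
    and inter: "\<forall>\<alpha>\<in>\<gamma>. is_interaction Bs \<alpha>"
    and R: "reach (sys Bs \<gamma>) ls v"
  shows "INV Bs \<gamma> ls v"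
  using R
proof induction
  case (init v)
  have "\<forall>x. 0 \<le> v x" "sat v (\<Union>i<length Bs. init_cc (Bs!i))" using init by (simp_all add: sys_simps)
  then have "INV Bs \<gamma> (map init_loc Bs) v" by (rule INV_init)
  then show ?case by (simp add: sys_simps)
next
  case (time l v d)
  have "0 \<le> d" "\<forall>t. 0 \<le> t \<and> t \<le> d \<longrightarrow> sat_tpc (sys Bs \<gamma>) l (delay v t)" using time by auto
  then show ?case by (rule INV_time[OF wf time.IH])
next
  case (disc l v a g r l')
  have "(l, a, g, r, l') \<in> edges (sys Bs \<gamma>)" "sat v g" "sat_tpc (sys Bs \<gamma>) l' (reset r v)" using disc by auto
  then show ?case by (rule INV_disc[OF wf dclks inter disc.IH])
qed

theorem corollary1:
  fixes Bs :: "('l, 'a, 'x) ta list"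
    and \<gamma> :: "'a set set"
    and nrm :: "nat \<Rightarrow> ('x, 'a) hclk zone \<Rightarrow> ('x, 'a) hclk zone"
  assumes "\<forall>i<length Bs. wf_ta (Bs ! i)"
    and "\<forall>i<length Bs. \<forall>j<length Bs. i \<noteq> j \<longrightarrow> acts (Bs ! i) \<inter> acts (Bs ! j) = {}"
    and "\<forall>i<length Bs. \<forall>j<length Bs. i \<noteq> j \<longrightarrow> clks (Bs ! i) \<inter> clks (Bs ! j) = {}"
    and "\<forall>\<alpha>\<in>\<gamma>. is_interaction Bs \<alpha>"
    and "\<forall>i Z. Z \<subseteq> nrm i Z"
  shows "invariant (sys Bs \<gamma>) (Phi Bs \<gamma> nrm)"
  unfolding invariant_def
proof (intro allI impI)
  fix ls v assume R: "reach (sys Bs \<gamma>) ls v"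
  have "INV Bs \<gamma> ls v" by (rule main_inv[OF assms(1) assms(3) assms(4) R])
  then obtain w :: "('x, 'a) hclk val" and s and f :: "nat \<Rightarrow> real" where
    W: "\<forall>x. w (Cl x) = v x" "0 \<le> w H0" "\<forall>a. w (Hact a) = f (idx s a)" "mono f" "0 \<le> f 0"
    "set s \<subseteq> \<gamma>"
    "\<forall>i<length Bs. \<exists>u. reach (hist (Bs!i)) (ls!i) u \<and> (\<forall>c\<in>clks (hist (Bs!i)). u c = w c)"
    "II Bs \<gamma> ls"
    unfolding INV_def apply (elim exE conjE) apply (rule that) apply assumption+ done
  have pos: "\<forall>a\<in>(\<Union>i<length Bs. acts (Bs ! i)). 0 \<le> w (Hact a)"
  proof
    fix a
    have "f 0 \<le> f (idx s a)" using W(4) by (simp add: monoD)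
    then show "0 \<le> w (Hact a)" using W(3,5) by simp
  qed
  have ci: "\<forall>i<length Bs. CI (hist (Bs ! i)) (nrm i) (ls ! i) w"
  proof (intro allI impI)
    fix i assume i: "i < length Bs"
    obtain u where u: "reach (hist (Bs!i)) (ls!i) u" "\<forall>c\<in>clks (hist (Bs!i)). u c = w c"
      using W(7) i by meson
    have "\<forall>Z. Z \<subseteq> nrm i Z" using assms(5) by blast
    then show "CI (hist (Bs ! i)) (nrm i) (ls ! i) w" by (rule CI_of_reach[OF u(1) _ u(2)])
  qed
  have actsub: "Act \<gamma> \<subseteq> (\<Union>i<length Bs. acts (Bs ! i))"
    using assms(4) unfolding Act_def is_interaction_def by blast
  have "finite (\<Union>i<length Bs. acts (Bs ! i))"
    using assms(1) unfolding wf_ta_def by simp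
  then have fin: "finite (Act \<gamma> - {})" using actsub by (simp add: finite_subset)
  have om: "ominus \<gamma> {} = \<gamma>"
  proof -
    have "\<forall>\<alpha>\<in>\<gamma>. \<alpha> \<noteq> {}" using assms(4) unfolding is_interaction_def by blast
    then show ?thesis unfolding ominus_def by force
  qed
  have "EE (ominus \<gamma> {}) (\<lambda>a. w (Hact a))"
    by (rule EE_hist[OF W(6) fin W(4)]) (use W(3) in simp)
  then have ee: "EE \<gamma> (\<lambda>a. w (Hact a))" by (simp add: om)
  show "Phi Bs \<gamma> nrm ls v"
    unfolding Phi_def
    by (rule exI[of _ w]) (use W(1,2,8) pos ci ee in blast)
qed

end
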